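(* Every LSGA net is distributed.
   Context: A Petri net $N=(S,T,F,M_0,\ell)$ has disjoint $S,T$, $F:(S\times T)\cup(T\times S)\to\mathbb N$, $M_0\in\mathbb N^S$, labelling $\ell$. ${}^\bullet x(y)=F(y,x)$, $x^\bullet(y)=F(x,y)$. For a finite nonempty multiset $G$ of transitions, $M[G\rangle M'$ iff ${}^\bullet G\le M$ and $M'=M-{}^\bullet G+G^\bullet$; $t\smile u$ iff $M[\{t\}+\{u\}\rangle$ for some reachable $M$. A net is distributed iff there is a function $D$ on $S\cup T$ with (1) $s\in{}^\bullet t\Rightarrow D(t)=D(s)$ and (2) $t\smile u\Rightarrow D(t)\ne D(u)$. A component with interface is $(N,I,O)$ with $I,O\subseteq S$, $I\cap O=\emptyset$ and $o^\bullet=\emptyset$ for $o\in O$; it is sequential iff there is $Q\subseteq S\setminus(I\cup O)$ with $|{}^\bullet t\restriction Q|=|t^\bullet\restriction Q|=1$ for all $t\in T$ and $|M_0\restriction Q|=1$. For components $((S_k,T_k,F_k,M_{0k},\ell_k),I_k,O_k)$, $k\in K$, with $(S_k\cup T_k)\cap(S_l\cup T_l)=(I_k\cup O_k)\cap(I_l\cup O_l)$ and $I_k\cap I_l=\emptyset$ for $k\ne l$, the asynchronous parallel composition is $((\bigcup S_k,\bigcup T_k,\bigcup F_k,\sum M_{0k},\bigcup\ell_k),\bigcup I_k,\bigcup O_k\setminus\bigcup I_k)$. $N$ is an LSGA net iff $(N,I,O)$ equals the asynchronous parallel composition of some family of sequential components, for some $I,O$. *)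

theory Defs
  imports Main "HOL-Library.Multiset"
begin

text \<open>Places and transitions live in a common node type 'x.
  Flow F x y is the arc weight from x to y; the initial marking and the labelling are
  total functions, meaningful only on S resp. T.\<close>

record ('x, 'l) pnet =
  places :: "'x set"
  trans  :: "'x set"
  flow   :: "'x \<Rightarrow> 'x \<Rightarrow> nat"
  init   :: "'x \<Rightarrow> nat"
  lab    :: "'x \<Rightarrow> 'l"

definition petri_net :: "('x, 'l) pnet \<Rightarrow> bool" where
  "petri_net N \<longleftrightarrow>
     places N \<inter> trans N = {} \<and>
     (\<forall>x y. flow N x y \<noteq> 0 \<longrightarrow>
        (x \<in> places N \<and> y \<in> trans N) \<or> (x \<in> trans N \<and> y \<in> places N)) \<and>
     (\<forall>s. init N s \<noteq> 0 \<longrightarrow> s \<in> places N)"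

definition preset_ms :: "('x, 'l) pnet \<Rightarrow> 'x multiset \<Rightarrow> 'x \<Rightarrow> nat" where
  "preset_ms N G = (\<lambda>s. \<Sum>\<^sub># (image_mset (\<lambda>t. flow N s t) G))"

definition postset_ms :: "('x, 'l) pnet \<Rightarrow> 'x multiset \<Rightarrow> 'x \<Rightarrow> nat" where
  "postset_ms N G = (\<lambda>s. \<Sum>\<^sub># (image_mset (\<lambda>t. flow N t s) G))"

definition fires :: "('x, 'l) pnet \<Rightarrow> ('x \<Rightarrow> nat) \<Rightarrow> 'x multiset \<Rightarrow> ('x \<Rightarrow> nat) \<Rightarrow> bool" where
  "fires N M G M' \<longleftrightarrow>
     G \<noteq> {#} \<and> set_mset G \<subseteq> trans N \<and>
     (\<forall>s. preset_ms N G s \<le> M s) \<and>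
     M' = (\<lambda>s. M s - preset_ms N G s + postset_ms N G s)"

inductive reachable :: "('x, 'l) pnet \<Rightarrow> ('x \<Rightarrow> nat) \<Rightarrow> bool" for N where
  init_reach: "reachable N (init N)"
| step_reach: "reachable N M \<Longrightarrow> fires N M G M' \<Longrightarrow> reachable N M'"

definition concurrent :: "('x, 'l) pnet \<Rightarrow> 'x \<Rightarrow> 'x \<Rightarrow> bool" where
  "concurrent N t u \<longleftrightarrow> (\<exists>M M'. reachable N M \<and> fires N M ({#t#} + {#u#}) M')"

text \<open>The distribution function is taken with values in the node type
  itself; this is no loss of generality (any distribution can be recoded injectively into
  S \<union> T by choosing a representative node of each location).\<close>

definition distributed :: "('x, 'l) pnet \<Rightarrow> bool" where
  "distributed N \<longleftrightarrow>
     (\<exists>D :: 'x \<Rightarrow> 'x.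
        (\<forall>t \<in> trans N. \<forall>s \<in> places N. flow N s t \<noteq> 0 \<longrightarrow> D t = D s) \<and>
        (\<forall>t \<in> trans N. \<forall>u \<in> trans N. concurrent N t u \<longrightarrow> D t \<noteq> D u))"

definition restr_size_one :: "'x set \<Rightarrow> ('x \<Rightarrow> nat) \<Rightarrow> bool" where
  "restr_size_one Q f \<longleftrightarrow>
     finite {s \<in> Q. f s \<noteq> 0} \<and> (\<Sum>s \<in> {s \<in> Q. f s \<noteq> 0}. f s) = 1"

definition component :: "('x, 'l) pnet \<Rightarrow> 'x set \<Rightarrow> 'x set \<Rightarrow> bool" where
  "component N Inp Out \<longleftrightarrow>
     petri_net N \<and> Inp \<subseteq> places N \<and> Out \<subseteq> places N \<and> Inp \<inter> Out = {} \<and>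
     (\<forall>p \<in> Out. \<forall>x. flow N p x = 0)"

definition sequential_component :: "('x, 'l) pnet \<Rightarrow> 'x set \<Rightarrow> 'x set \<Rightarrow> bool" where
  "sequential_component N Inp Out \<longleftrightarrow>
     component N Inp Out \<and>
     (\<exists>Q. Q \<subseteq> places N - (Inp \<union> Out) \<and>
        (\<forall>t \<in> trans N. restr_size_one Q (\<lambda>s. flow N s t) \<and> restr_size_one Q (\<lambda>s. flow N t s)) \<and>
        restr_size_one Q (init N))"

definition fam_sum :: "'k set \<Rightarrow> ('k \<Rightarrow> nat) \<Rightarrow> nat" where
  "fam_sum K f = (\<Sum>k \<in> {k \<in> K. f k \<noteq> 0}. f k)"

definition async_composition ::
  "'k set \<Rightarrow> ('k \<Rightarrow> ('x, 'l) pnet) \<Rightarrow> ('k \<Rightarrow> 'x set) \<Rightarrow> ('k \<Rightarrow> 'x set)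
   \<Rightarrow> ('x, 'l) pnet \<Rightarrow> 'x set \<Rightarrow> 'x set \<Rightarrow> bool" where
  "async_composition K C Ik Ok N Inp Out \<longleftrightarrow>
     (\<forall>k \<in> K. \<forall>l \<in> K. k \<noteq> l \<longrightarrow>
        (places (C k) \<union> trans (C k)) \<inter> (places (C l) \<union> trans (C l))
          = (Ik k \<union> Ok k) \<inter> (Ik l \<union> Ok l) \<and>
        Ik k \<inter> Ik l = {}) \<and>
     (\<forall>s. finite {k \<in> K. init (C k) s \<noteq> 0}) \<and>
     places N = (\<Union>k \<in> K. places (C k)) \<and>
     trans N = (\<Union>k \<in> K. trans (C k)) \<and>
     (\<forall>x y. flow N x y = fam_sum K (\<lambda>k. flow (C k) x y)) \<and>
     (\<forall>s. init N s = fam_sum K (\<lambda>k. init (C k) s)) \<and>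
     (\<forall>k \<in> K. \<forall>t \<in> trans (C k). lab N t = lab (C k) t) \<and>
     Inp = (\<Union>k \<in> K. Ik k) \<and>
     Out = (\<Union>k \<in> K. Ok k) - (\<Union>k \<in> K. Ik k)"

definition LSGA :: "'k itself \<Rightarrow> ('x, 'l) pnet \<Rightarrow> bool" where
  "LSGA _ N \<longleftrightarrow>
     (\<exists>Inp Out (K :: 'k set) C Ik Ok.
        (\<forall>k \<in> K. sequential_component (C k) (Ik k) (Ok k)) \<and>
        async_composition K C Ik Ok N Inp Out)"

end

theory Submission
  imports Defs
begin

lemma rso_char:
  "restr_size_one Q f \<longleftrightarrow> (\<exists>s\<in>Q. f s = 1 \<and> (\<forall>s'\<in>Q. s' \<noteq> s \<longrightarrow> f s' = 0))"
proof
  assume a: "restr_size_one Q f"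
  let ?A = "{s \<in> Q. f s \<noteq> 0}"
  have fin: "finite ?A" and sm: "(\<Sum>s\<in>?A. f s) = 1" using a unfolding restr_size_one_def by auto
  have "?A \<noteq> {}" using sm by (metis sum.empty zero_neq_one)
  then obtain s where s: "s \<in> ?A" by blast
  have le: "f s \<le> 1" using member_le_sum[OF s _ fin, of f] sm by simp
  hence fs: "f s = 1" using s by simp
  have "\<forall>s'\<in>Q. s' \<noteq> s \<longrightarrow> f s' = 0"
  proof (intro ballI impI, rule ccontr)
    fix s' assume "s' \<in> Q" "s' \<noteq> s" "f s' \<noteq> 0"
    hence "s' \<in> ?A - {s}" by auto
    hence "f s' \<le> (\<Sum>x\<in>?A - {s}. f x)" using fin by (intro member_le_sum) auto
    moreover have "(\<Sum>x\<in>?A. f x) = f s + (\<Sum>x\<in>?A - {s}. f x)" using fin s by (simp add: sum.remove)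
    ultimately show False using sm fs \<open>f s' \<noteq> 0\<close> by simp
  qed
  thus "\<exists>s\<in>Q. f s = 1 \<and> (\<forall>s'\<in>Q. s' \<noteq> s \<longrightarrow> f s' = 0)" using s fs by blast
next
  assume "\<exists>s\<in>Q. f s = 1 \<and> (\<forall>s'\<in>Q. s' \<noteq> s \<longrightarrow> f s' = 0)"
  then obtain s where s: "s \<in> Q" "f s = 1" "\<forall>s'\<in>Q. s' \<noteq> s \<longrightarrow> f s' = 0" by blast
  hence "{s \<in> Q. f s \<noteq> 0} = {s}" by auto
  thus "restr_size_one Q f" unfolding restr_size_one_def using s by simp
qed

lemma rso_cong: "(\<And>s. s \<in> Q \<Longrightarrow> f s = g s) \<Longrightarrow> restr_size_one Q f = restr_size_one Q g"
  unfolding rso_char by auto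

lemma fam_sum_single:
  assumes "k \<in> K" "\<forall>l\<in>K. l \<noteq> k \<longrightarrow> f l = 0"
  shows "fam_sum K f = f k"
proof -
  have "{l \<in> K. f l \<noteq> 0} \<subseteq> {k}" using assms by auto
  hence "{l \<in> K. f l \<noteq> 0} = {} \<or> {l \<in> K. f l \<noteq> 0} = {k}" by blast
  thus ?thesis unfolding fam_sum_def using assms by auto
qed

lemma fam_sum_nz: "fam_sum K f \<noteq> 0 \<Longrightarrow> \<exists>k\<in>K. f k \<noteq> 0"
proof (rule ccontr)
  assume a: "fam_sum K f \<noteq> 0" "\<not> (\<exists>k\<in>K. f k \<noteq> 0)"
  hence "{k \<in> K. f k \<noteq> 0} = {}" by blast
  thus False using a(1) unfolding fam_sum_def by simp
qed

lemma pn_zero: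
  assumes "petri_net M" "x \<notin> places M \<union> trans M"
  shows "flow M x y = 0" "flow M y x = 0" "init M x = 0"
  using assms unfolding petri_net_def by auto

lemma sum_filter_zero:
  assumes "\<forall>x. \<not> P x \<longrightarrow> f x = (0::nat)"
  shows "sum_mset (image_mset f G) = sum_mset (image_mset f (filter_mset P G))"
  using assms by (induction G) auto

locale lsga =
  fixes K :: "'k set" and C :: "'k \<Rightarrow> ('x, 'l) pnet" and Ik Ok :: "'k \<Rightarrow> 'x set"
    and N :: "('x, 'l) pnet" and Inp Out :: "'x set"
  assumes seq: "\<forall>k \<in> K. sequential_component (C k) (Ik k) (Ok k)"
    and comp: "async_composition K C Ik Ok N Inp Out"
    and pnN: "petri_net N"
begin

lemma compo: "k \<in> K \<Longrightarrow> component (C k) (Ik k) (Ok k)"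
  using seq unfolding sequential_component_def by auto

lemma pn: "k \<in> K \<Longrightarrow> petri_net (C k)"
  using compo unfolding component_def by auto

definition Q where "Q k = (SOME Q. Q \<subseteq> places (C k) - (Ik k \<union> Ok k) \<and>
        (\<forall>t \<in> trans (C k). restr_size_one Q (\<lambda>s. flow (C k) s t) \<and> restr_size_one Q (\<lambda>s. flow (C k) t s)) \<and>
        restr_size_one Q (init (C k)))"

lemma Qk: assumes "k \<in> K"
  shows "Q k \<subseteq> places (C k) - (Ik k \<union> Ok k) \<and>
        (\<forall>t \<in> trans (C k). restr_size_one (Q k) (\<lambda>s. flow (C k) s t) \<and> restr_size_one (Q k) (\<lambda>s. flow (C k) t s)) \<and>
        restr_size_one (Q k) (init (C k))"
proof -
  from bspec[OF seq assms] obtain Q0 where "Q0 \<subseteq> places (C k) - (Ik k \<union> Ok k) \<and>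
        (\<forall>t \<in> trans (C k). restr_size_one Q0 (\<lambda>s. flow (C k) s t) \<and> restr_size_one Q0 (\<lambda>s. flow (C k) t s)) \<and>
        restr_size_one Q0 (init (C k))" unfolding sequential_component_def by (elim conjE exE) blast
  thus ?thesis unfolding Q_def by (rule someI)
qed

lemma excl:
  assumes "k \<in> K" "l \<in> K" "k \<noteq> l" "x \<in> places (C k) \<union> trans (C k)" "x \<notin> Ik k \<union> Ok k"
  shows "x \<notin> places (C l) \<union> trans (C l)"
proof -
  have "(places (C k) \<union> trans (C k)) \<inter> (places (C l) \<union> trans (C l)) = (Ik k \<union> Ok k) \<inter> (Ik l \<union> Ok l)"
    using comp assms(1-3) unfolding async_composition_def by simp
  thus ?thesis using assms(4,5) by blast
qed

lemma flowQ:
  assumes "k \<in> K" "s \<in> Q k"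
  shows "flow N s t = flow (C k) s t" "flow N t s = flow (C k) t s" "init N s = init (C k) s"
proof -
  have s: "s \<in> places (C k)" "s \<notin> Ik k \<union> Ok k" using Qk[OF assms(1)] assms(2) by auto
  have z: "\<And>l. l \<in> K \<Longrightarrow> l \<noteq> k \<Longrightarrow> s \<notin> places (C l) \<union> trans (C l)"
    using excl[OF assms(1)] s by blast
  have fs: "\<forall>x y. flow N x y = fam_sum K (\<lambda>k. flow (C k) x y)"
    "\<forall>s. init N s = fam_sum K (\<lambda>k. init (C k) s)"
    using comp unfolding async_composition_def by auto
  have "flow N s t = fam_sum K (\<lambda>k. flow (C k) s t)" using fs by simp
  also have "\<dots> = flow (C k) s t"
    by (rule fam_sum_single[OF assms(1)]) (use pn_zero[OF pn] z in blast)
  finally show "flow N s t = flow (C k) s t" .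
  have "flow N t s = fam_sum K (\<lambda>k. flow (C k) t s)" using fs by simp
  also have "\<dots> = flow (C k) t s"
    by (rule fam_sum_single[OF assms(1)]) (use pn_zero[OF pn] z in blast)
  finally show "flow N t s = flow (C k) t s" .
  have "init N s = fam_sum K (\<lambda>k. init (C k) s)" using fs by simp
  also have "\<dots> = init (C k) s"
    by (rule fam_sum_single[OF assms(1)]) (use pn_zero[OF pn] z in blast)
  finally show "init N s = init (C k) s" .
qed

lemma flowQ_out:
  assumes "k \<in> K" "s \<in> Q k" "t \<notin> trans (C k)"
  shows "flow (C k) s t = 0" "flow (C k) t s = 0"
  using pn[OF assms(1)] Qk[OF assms(1)] assms(2,3) unfolding petri_net_def by auto

lemma pre_H:
  assumes "k \<in> K" "s \<in> Q k"
  shows "preset_ms N G s = sum_mset (image_mset (\<lambda>t. flow (C k) s t) (filter_mset (\<lambda>t. t \<in> trans (C k)) G))"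
    "postset_ms N G s = sum_mset (image_mset (\<lambda>t. flow (C k) t s) (filter_mset (\<lambda>t. t \<in> trans (C k)) G))"
  unfolding preset_ms_def postset_ms_def flowQ[OF assms]
  by (auto intro!: sum_filter_zero flowQ_out[OF assms])

definition one_at where "one_at A f s0 \<longleftrightarrow> s0 \<in> A \<and> f s0 = 1 \<and> (\<forall>s'\<in>A. s' \<noteq> s0 \<longrightarrow> f s' = 0)"

lemma step_le1:
  assumes k: "k \<in> K" and M: "one_at (Q k) M s0" and f: "fires N M G M'"
  shows "size (filter_mset (\<lambda>t. t \<in> trans (C k)) G) \<le> 1"
proof -
  let ?H = "filter_mset (\<lambda>t. t \<in> trans (C k)) G"
  have pre: "\<And>s. preset_ms N G s \<le> M s" using f unfolding fires_def by auto
  have ps: "\<And>t. t \<in># ?H \<Longrightarrow> \<exists>p\<in>Q k. flow (C k) p t = 1 \<and> (\<forall>s'\<in>Q k. s' \<noteq> p \<longrightarrow> flow (C k) s' t = 0)"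
    using Qk[OF k] unfolding rso_char by auto
  have all: "\<And>t. t \<in># ?H \<Longrightarrow> flow (C k) s0 t = 1"
  proof -
    fix t assume t: "t \<in># ?H"
    obtain p where p: "p \<in> Q k" "flow (C k) p t = 1" "\<forall>s'\<in>Q k. s' \<noteq> p \<longrightarrow> flow (C k) s' t = 0"
      using ps[OF t] by blast
    have "flow (C k) p t \<le> sum_mset (image_mset (\<lambda>t. flow (C k) p t) ?H)"
      using t by (metis image_mset_add_mset insert_DiffM le_add1 sum_mset.insert)
    also have "\<dots> = preset_ms N G p" using pre_H[OF k p(1)] by simp
    also have "\<dots> \<le> M p" by (rule pre)
    finally have "M p \<ge> 1" using p by simp
    hence "p = s0" using M p(1) unfolding one_at_def by force
    thus "flow (C k) s0 t = 1" using p by simp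
  qed
  have "sum_mset (image_mset (\<lambda>t. flow (C k) s0 t) ?H) = sum_mset (image_mset (\<lambda>t. 1) ?H)"
    using all by (metis (no_types, lifting) image_mset_cong)
  also have "\<dots> = size ?H" by (simp add: size_multiset_overloaded_eq)
  finally have "size ?H = preset_ms N G s0" using pre_H[OF k] M unfolding one_at_def by auto
  also have "\<dots> \<le> M s0" by (rule pre)
  finally show ?thesis using M unfolding one_at_def by simp
qed

lemma invariant:
  assumes k: "k \<in> K" and r: "reachable N M"
  shows "restr_size_one (Q k) M"
  using r
proof induction
  case init_reach
  have "restr_size_one (Q k) (init (C k))" using Qk[OF k] by auto
  thus ?case using rso_cong[of "Q k" "init N" "init (C k)"] flowQ[OF k] by auto
next
  case (step_reach M G M')
  then obtain s0 where M: "one_at (Q k) M s0" unfolding rso_char one_at_def by blast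
  let ?H = "filter_mset (\<lambda>t. t \<in> trans (C k)) G"
  have le: "size ?H \<le> 1" by (rule step_le1[OF k M step_reach(2)])
  have M': "M' = (\<lambda>s. M s - preset_ms N G s + postset_ms N G s)"
    using step_reach(2) unfolding fires_def by auto
  show ?case
  proof (cases "size ?H = 0")
    case True
    hence E: "?H = {#}" by simp
    have "\<And>s. s \<in> Q k \<Longrightarrow> M' s = M s"
    proof -
      fix s assume s: "s \<in> Q k"
      show "M' s = M s" unfolding M' pre_H[OF k s] E by simp
    qed
    thus ?thesis using rso_cong[of "Q k" M' M] step_reach(3) by auto
  next
    case False
    then obtain t where H: "?H = {#t#}" using le
      by (metis One_nat_def le_SucE le_zero_eq size_1_singleton_mset)
    hence t: "t \<in> trans (C k)" by (metis filter_mset_eq_conv multi_member_last)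
    have rt: "restr_size_one (Q k) (\<lambda>s. flow (C k) s t)" "restr_size_one (Q k) (\<lambda>s. flow (C k) t s)"
      using Qk[OF k] t by auto
    have s0t: "flow (C k) s0 t = 1"
    proof -
      obtain p where p: "p \<in> Q k" "flow (C k) p t = 1" "\<forall>s'\<in>Q k. s' \<noteq> p \<longrightarrow> flow (C k) s' t = 0"
        using rt(1) unfolding rso_char by blast
      have "preset_ms N G p = 1" using pre_H[OF k p(1)] H p by simp
      hence "M p \<ge> 1" using step_reach(2) unfolding fires_def by (metis)
      hence "p = s0" using M p(1) unfolding one_at_def by force
      thus ?thesis using p by simp
    qed
    have "\<And>s. s \<in> Q k \<Longrightarrow> M' s = flow (C k) t s"
    proof -
      fix s assume s: "s \<in> Q k"
      have "M s - flow (C k) s t = 0"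
      proof (cases "s = s0")
        case True thus ?thesis using M s0t unfolding one_at_def by simp
      next
        case False thus ?thesis using M s unfolding one_at_def by simp
      qed
      thus "M' s = flow (C k) t s" using M' pre_H[OF k s] H by simp
    qed
    thus ?thesis using rso_cong[of "Q k" M' "\<lambda>s. flow (C k) t s"] rt(2) by auto
  qed
qed

lemma no_conc:
  assumes k: "k \<in> K" and t: "t \<in> trans (C k)" and u: "u \<in> trans (C k)"
  shows "\<not> concurrent N t u"
proof
  assume "concurrent N t u"
  then obtain M M' where r: "reachable N M" and f: "fires N M ({#t#} + {#u#}) M'"
    unfolding concurrent_def by blast
  obtain s0 where "one_at (Q k) M s0" using invariant[OF k r] unfolding rso_char one_at_def by blast
  from step_le1[OF k this f] show False using t u by simp
qed

definition in_comp where "in_comp k x \<longleftrightarrow> x \<in> trans (C k) \<or> x \<in> places (C k) - Ok k"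

lemma in_comp_uniq:
  assumes "k \<in> K" "l \<in> K" "in_comp k x" "in_comp l x"
  shows "k = l"
proof (rule ccontr)
  assume ne: "k \<noteq> l"
  have d: "(places (C k) \<union> trans (C k)) \<inter> (places (C l) \<union> trans (C l)) = (Ik k \<union> Ok k) \<inter> (Ik l \<union> Ok l)"
    "Ik k \<inter> Ik l = {}"
    using comp assms ne unfolding async_composition_def by auto
  have ck: "component (C k) (Ik k) (Ok k)" "component (C l) (Ik l) (Ok l)" using compo assms by auto
  have x: "x \<in> (Ik k \<union> Ok k) \<inter> (Ik l \<union> Ok l)" using d(1) assms(3,4) unfolding in_comp_def by blast
  show False using x d(2) ck assms(3,4) unfolding in_comp_def component_def petri_net_def by blast
qed

definition comp_of where "comp_of x = (SOME k. k \<in> K \<and> in_comp k x)"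

lemma comp_of_eq: "k \<in> K \<Longrightarrow> in_comp k x \<Longrightarrow> comp_of x = k"
  unfolding comp_of_def by (rule some_equality) (auto intro: in_comp_uniq)

definition rep where "rep k = (SOME s. s \<in> Q k)"

lemma rep_in: "k \<in> K \<Longrightarrow> rep k \<in> Q k"
  using Qk unfolding rso_char rep_def by (meson someI)

lemma result: "distributed N"
  unfolding distributed_def
proof (intro exI[of _ "\<lambda>x. rep (comp_of x)"] conjI ballI impI)
  fix t s assume t: "t \<in> trans N" and s: "s \<in> places N" and fl: "flow N s t \<noteq> 0"
  then obtain k where k: "k \<in> K" "flow (C k) s t \<noteq> 0"
  proof -
    have "flow N s t = fam_sum K (\<lambda>k. flow (C k) s t)" using comp unfolding async_composition_def by simp
    thus ?thesis using fl fam_sum_nz[of K "\<lambda>k. flow (C k) s t"] that by auto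
  qed
  have tN: "trans (C k) \<subseteq> trans N" using comp k(1) unfolding async_composition_def by auto
  have "s \<notin> trans N" using s pnN unfolding petri_net_def by blast
  hence "s \<notin> trans (C k)" using tN by blast
  hence st: "s \<in> places (C k)" "t \<in> trans (C k)" "s \<notin> Ok k"
    using pn[OF k(1)] compo[OF k(1)] k(2) unfolding petri_net_def component_def by auto
  have "comp_of t = k" "comp_of s = k" using st k(1) by (auto intro!: comp_of_eq simp: in_comp_def)
  thus "rep (comp_of t) = rep (comp_of s)" by simp
next
  fix t u assume t: "t \<in> trans N" and u: "u \<in> trans N" and c: "concurrent N t u"
  obtain k where k: "k \<in> K" "t \<in> trans (C k)" using t comp unfolding async_composition_def by auto
  obtain l where l: "l \<in> K" "u \<in> trans (C l)" using u comp unfolding async_composition_def by auto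
  have ct: "comp_of t = k" "comp_of u = l" using k l by (auto intro!: comp_of_eq simp: in_comp_def)
  show "rep (comp_of t) \<noteq> rep (comp_of u)"
  proof
    assume eq: "rep (comp_of t) = rep (comp_of u)"
    show False
    proof (cases "k = l")
      case True thus False using no_conc[OF k(1) k(2)] l(2) c by simp
    next
      case False
      have "rep k \<in> places (C k)" "rep k \<notin> Ik k \<union> Ok k" using rep_in[OF k(1)] Qk[OF k(1)] by auto
      hence "rep k \<notin> places (C l) \<union> trans (C l)" using excl[OF k(1) l(1) False] by blast
      moreover have "rep l \<in> places (C l)" using rep_in[OF l(1)] Qk[OF l(1)] by auto
      ultimately show False using eq ct by simp
    qed
  qed
qed

end

theorem corollary4p13:
  fixes N :: "('x, 'l) pnet"
  assumes "petri_net N"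
    and "LSGA TYPE('k) N"
  shows "distributed N"
proof -
  obtain Inp Out and K :: "'k set" and C Ik Ok where
    "\<forall>k \<in> K. sequential_component (C k) (Ik k) (Ok k)"
    "async_composition K C Ik Ok N Inp Out"
    using assms(2) unfolding LSGA_def by blast
  then interpret lsga K C Ik Ok N Inp Out using assms(1) by unfold_locales
  show ?thesis by (rule result)
qed

end
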